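(* Let $A(n)=\sum_{r=0}^n n!/r!$ for $n\ge0$ (so $A(n)/n!$ is the $n$th partial sum of $\sum_{r\ge0}1/r!$). Define $Q(0)=0$, $Q(1)=1$, $Q(n)=b(n)Q(n-1)+Q(n-2)$ for $n\ge2$, where $b(n)=2n/3$ if $3\mid n$ and $b(n)=1$ if $3\nmid n$. For an integer $x$ let $[x]_2$ be the largest power $2^k$ ($k\ge0$) dividing $x$, with $[0]_2=\infty$. Suppose that for every $n\ge 0$: (i) $[Q(3n)]_2\le 4[n(n+2)]_2$; (ii) $[Q(3n+1)]_2\le 2[n+1]_2$; (iii) $[Q(3n+2)]_2=1$; (iv) $[A(n)]_2\le (n+1)^2$. Then exactly two partial sums $A(m)/m!$ of the Taylor series $e=\sum_{r\ge0}1/r!$ are convergents of the simple continued fraction expansion of $e$.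
   Context: The convergents of $e$ are the rationals obtained by truncating the simple continued fraction $e=[2,1,2,1,1,4,1,1,6,1,1,8,\dots]$; their denominators are the $Q(n)$ above. A partial sum "is a convergent" if it equals one of these rationals. *)

theory Defs
  imports Complex_Main "HOL-Computational_Algebra.Primes" "HOL-Library.Extended_Nat"
begin

definition A :: "nat \<Rightarrow> nat" where
  "A n = (\<Sum>r\<le>n. fact n div fact r)"

definition b :: "nat \<Rightarrow> nat" where
  "b n = (if 3 dvd n then 2 * n div 3 else 1)"

fun Q :: "nat \<Rightarrow> nat" where
  "Q 0 = 0"
| "Q (Suc 0) = 1"
| "Q (Suc (Suc n)) = b (Suc (Suc n)) * Q (Suc n) + Q n"

definition pow2part :: "nat \<Rightarrow> enat" where
  "pow2part x = (if x = 0 then \<infinity> else (2::enat) ^ multiplicity (2::nat) x)"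

text \<open>Partial quotients of the simple continued fraction e = [2;1,2,1,1,4,1,1,6,...].\<close>
definition e_cf :: "nat \<Rightarrow> nat" where
  "e_cf k = (if k = 0 then 2 else if k mod 3 = 2 then 2 * (k + 1) div 3 else 1)"

fun cf_eval :: "nat list \<Rightarrow> rat" where
  "cf_eval [] = 0"
| "cf_eval [a] = of_nat a"
| "cf_eval (a # rest) = of_nat a + 1 / cf_eval rest"

definition e_convergent :: "nat \<Rightarrow> rat" where
  "e_convergent k = cf_eval (map e_cf [0..<Suc k])"

end

theory Submission
  imports Defs
begin

fun nd :: "nat list \<Rightarrow> nat \<times> nat \<Rightarrow> nat \<times> nat" where
  "nd [] pq = pq"
| "nd (a # rest) pq = (case nd rest pq of (x, y) \<Rightarrow> (a * x + y, x))"

lemma nd_append: "nd (xs @ ys) pq = nd xs (nd ys pq)"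
  by (induction xs) auto

lemma nd_pos: "\<forall>a\<in>set xs. a > 0 \<Longrightarrow> fst pq > 0 \<Longrightarrow> snd pq > 0 \<Longrightarrow>
   fst (nd xs pq) > 0 \<and> snd (nd xs pq) > 0"
  by (induction xs) (auto split: prod.split)

lemma cf_snoc: "\<forall>a\<in>set xs. a > 0 \<Longrightarrow> c > 0 \<Longrightarrow>
  cf_eval (xs @ [c]) = of_nat (fst (nd xs (c,1))) / of_nat (snd (nd xs (c,1)))"
proof (induction xs)
  case Nil
  then show ?case by simp
next
  case (Cons a xs)
  obtain y ys where yy: "xs @ [c] = y # ys" by (cases "xs @ [c]") auto
  obtain u w where uw: "nd xs (c,1) = (u,w)" by (cases "nd xs (c,1)")
  have pos: "u > 0" "w > 0" using nd_pos[of xs "(c,1)"] Cons.prems uw by auto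
  have "cf_eval ((a # xs) @ [c]) = of_nat a + 1 / cf_eval (xs @ [c])"
    using yy by simp
  also have "\<dots> = of_nat a + 1 / (of_nat u / of_nat w)"
    using Cons uw by simp
  also have "\<dots> = of_nat (a*u+w) / of_nat u" using pos by (simp add: field_simps)
  finally show ?case using uw by simp
qed

lemma nd_lin: "nd xs (p,q) = (p * fst (nd xs (1,0)) + q * fst (nd xs (0,1)),
                              p * snd (nd xs (1,0)) + q * snd (nd xs (0,1)))"
  by (induction xs) (auto split: prod.split simp: algebra_simps)

lemma e_cf_pos: "e_cf k > 0"
  unfolding e_cf_def by auto

definition W :: "nat \<Rightarrow> nat \<times> nat" where
  "W k = nd (map e_cf [0..<Suc k]) (1,0)"
definition V :: "nat \<Rightarrow> nat \<times> nat" where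
  "V k = nd (map e_cf [0..<Suc k]) (0,1)"

lemma conv_W: "e_convergent k = of_nat (fst (W k)) / of_nat (snd (W k))"
proof -
  have "map e_cf [0..<Suc k] = map e_cf [0..<k] @ [e_cf k]" by simp
  moreover have "W k = nd (map e_cf [0..<k]) (e_cf k, 1)"
    unfolding W_def by (simp add: nd_append)
  ultimately show ?thesis unfolding e_convergent_def
    using cf_snoc[of "map e_cf [0..<k]" "e_cf k"] e_cf_pos by simp
qed

lemma W0: "W 0 = (2,1)" by (simp add: W_def e_cf_def)
lemma V0: "V 0 = (1,0)" by (simp add: V_def e_cf_def)
lemma V_Suc: "V (Suc k) = W k"
  unfolding V_def W_def by (simp add: nd_append del: upt_Suc) (simp add: nd_append)
lemma W_Suc: "W (Suc k) = (e_cf (Suc k) * fst (W k) + fst (V k), e_cf (Suc k) * snd (W k) + snd (V k))"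
proof -
  have "W (Suc k) = nd (map e_cf [0..<Suc k]) (e_cf (Suc k), 1)"
    unfolding W_def by (simp add: nd_append)
  then show ?thesis using nd_lin[of "map e_cf [0..<Suc k]" "e_cf (Suc k)" 1] unfolding W_def V_def by simp
qed

lemma W1: "W (Suc 0) = (3,1)" using W_Suc[of 0] by (simp add: W0 V0 e_cf_def)
lemma W_SS: "W (Suc (Suc k)) = (e_cf (Suc (Suc k)) * fst (W (Suc k)) + fst (W k),
    e_cf (Suc (Suc k)) * snd (W (Suc k)) + snd (W k))"
  using W_Suc[of "Suc k"] by (simp add: V_Suc)

lemma e_cf_b: "e_cf (Suc (Suc k)) = b (Suc (Suc (Suc k)))"
  unfolding e_cf_def b_def by (auto, presburger+)

lemma W_Q: "snd (W k) = Q (Suc k) \<and> snd (W (Suc k)) = Q (Suc (Suc k))"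
proof (induction k)
  case 0
  then show ?case by (simp add: W0 W1 b_def)
next
  case (Suc k)
  then show ?case by (simp add: W_SS e_cf_b)
qed

lemma W_det: "int (fst (W (Suc k))) * int (snd (W k)) - int (fst (W k)) * int (snd (W (Suc k))) = (-1)^k"
proof (induction k)
  case 0
  then show ?case by (simp add: W0 W1)
next
  case (Suc k)
  then show ?case by (simp add: W_SS algebra_simps)
qed

lemma W_coprime: "coprime (fst (W k)) (snd (W k))"
proof (rule coprimeI)
  fix d assume d1: "d dvd fst (W k)" and d2: "d dvd snd (W k)"
  have "int d dvd int (fst (W (Suc k))) * int (snd (W k)) - int (fst (W k)) * int (snd (W (Suc k)))"
    using d1 d2 by (intro dvd_diff) (auto simp: int_dvd_int_iff)
  then have "int d dvd (-1)^k" using W_det[of k] by simp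
  moreover have "is_unit ((-1::int)^k)" by simp
  ultimately have "is_unit (int d)" using dvd_unit_imp_unit by blast
  then show "is_unit d" by simp
qed

lemma W_ge2: "fst (W k) \<ge> 2 * snd (W k) \<and> fst (W (Suc k)) \<ge> 2 * snd (W (Suc k))"
proof (induction k)
  case 0
  then show ?case by (simp add: W0 W1)
next
  case (Suc k)
  then have "e_cf (Suc (Suc k)) * (2 * snd (W (Suc k))) \<le> e_cf (Suc (Suc k)) * fst (W (Suc k))"
    by simp
  moreover have "2 * snd (W k) \<le> fst (W k)" using Suc by simp
  ultimately have "2 * snd (W k) + e_cf (Suc (Suc k)) * (2 * snd (W (Suc k))) \<le> fst (W k) + e_cf (Suc (Suc k)) * fst (W (Suc k))"
    by linarith
  then show ?case using Suc by (simp add: W_SS algebra_simps)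
qed

lemma Q_rec: "n \<ge> 2 \<Longrightarrow> Q n = b n * Q (n-1) + Q (n-2)"
proof -
  assume "n \<ge> 2"
  then obtain k where "n = Suc (Suc k)" by (metis add_2_eq_Suc le_Suc_ex)
  then show ?thesis by simp
qed

lemma b_ge1: "n \<ge> 1 \<Longrightarrow> b n \<ge> 1"
  unfolding b_def by auto

lemma Q_mono1: "Q n \<le> Q (Suc n)"
proof (cases "n \<ge> 1")
  case True
  have "Q (Suc n) = b (Suc n) * Q n + Q (n - 1)" using Q_rec[of "Suc n"] True by simp
  moreover have "1 * Q n \<le> b (Suc n) * Q n" by (rule mult_le_mono1) (use b_ge1[of "Suc n"] in simp)
  ultimately show ?thesis by linarith
next
  case False
  then have "n = 0" by simp
  then show ?thesis by simp
qed

lemma Q_mono: "m \<le> n \<Longrightarrow> Q m \<le> Q n"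
  using Q_mono1 by (rule lift_Suc_mono_le)

lemma Q_pos: "n \<ge> 1 \<Longrightarrow> Q n > 0"
  using Q_mono[of 1 n] by simp

lemma b3: "b (3*n+3) = 2*n+2"
  unfolding b_def by auto

lemma Q_grow: "Q (3*n+2) \<ge> 2^n * fact n"
proof (induction n)
  case 0
  then show ?case by (simp add: b_def)
next
  case (Suc n)
  have "Q (3*n+3) = b (3*n+3) * Q (3*n+2) + Q (3*n+1)" using Q_rec[of "3*n+3"] by simp
  then have "Q (3*n+3) \<ge> (2*n+2) * Q (3*n+2)" by (simp add: b3)
  moreover have "(2*n+2) * Q (3*n+2) \<ge> (2*n+2) * (2^n * fact n)" by (rule mult_le_mono2) (rule Suc.IH)
  moreover have "Q (3 * Suc n + 2) \<ge> Q (3*n+3)" by (rule Q_mono) simp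
  ultimately have "Q (3 * Suc n + 2) \<ge> (2*n+2) * (2^n * fact n)" by linarith
  moreover have "(2*n+2) * (2^n * fact n) = 2^Suc n * fact (Suc n)"
    by (simp add: algebra_simps)
  ultimately show ?case by simp
qed

abbreviation v :: "nat \<Rightarrow> nat" where "v x \<equiv> multiplicity (2::nat) x"

lemma enat_pow2: "(2::enat) ^ k = enat (2 ^ k)"
  by (induction k) (auto simp: numeral_eq_enat one_enat_def)

lemma pp: "x > 0 \<Longrightarrow> pow2part x = enat (2 ^ v x)"
  unfolding pow2part_def by (simp add: enat_pow2)

lemma pow2_le: "x > 0 \<Longrightarrow> 2 ^ v x \<le> x"
  using multiplicity_dvd[of 2 x] by (simp add: dvd_imp_le)

lemma v_mult: "x > 0 \<Longrightarrow> y > 0 \<Longrightarrow> v (x * y) = v x + v y"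
  by (rule prime_elem_multiplicity_mult_distrib) auto

lemma v_odd: "odd x \<Longrightarrow> v x = 0"
  by (rule not_dvd_imp_multiplicity_0) simp

lemma v_2odd: "odd y \<Longrightarrow> v (2 * y) = 1"
proof -
  assume "odd y"
  then have "y > 0" by (cases y) auto
  then have "v (2 * y) = v 2 + v y" by (simp add: v_mult)
  also have "v 2 = 1" by (simp add: multiplicity_self)
  finally show ?thesis using v_odd[OF \<open>odd y\<close>] by simp
qed

lemma nn2_bound: "n \<ge> 1 \<Longrightarrow> 2 ^ v (n * (n+2)) \<le> 2 * (n+2)"
proof -
  assume n: "n \<ge> 1"
  have vm: "v (n * (n+2)) = v n + v (n+2)" by (rule v_mult) (use n in auto)
  show ?thesis
  proof (cases "even n")
    case False
    then show ?thesis using vm v_odd[of n] v_odd[of "n+2"] by simp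
  next
    case True
    then obtain t where t: "n = 2 * t" by blast
    show ?thesis
    proof (cases "even t")
      case True
      have "n + 2 = 2 * (t + 1)" using t by simp
      then have "v (n+2) = 1" using v_2odd[of "t+1"] True by simp
      then have "2 ^ v (n * (n+2)) = 2 * 2 ^ v n" using vm by simp
      also have "\<dots> \<le> 2 * n" using pow2_le[of n] n by simp
      finally show ?thesis by simp
    next
      case False
      then have "v n = 1" using v_2odd t by simp
      then have "2 ^ v (n * (n+2)) = 2 * 2 ^ v (n+2)" using vm by simp
      also have "\<dots> \<le> 2 * (n+2)" using pow2_le[of "n+2"] by simp
      finally show ?thesis by simp
    qed
  qed
qed

lemma A_pos: "A m > 0"
proof -
  have "fact m div fact m \<le> A m" unfolding A_def
    by (rule member_le_sum) auto
  then show ?thesis by simp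
qed

lemma fact2: "2^k * fact k dvd (fact (2*k) :: nat)"
proof (induction k)
  case 0
  then show ?case by simp
next
  case (Suc k)
  have e1: "fact (2 * Suc k) = (2*k+2) * ((2*k+1) * (fact (2*k) :: nat))"
    by (simp add: algebra_simps)
  have e2: "2^Suc k * fact (Suc k) = (2*k+2) * (2^k * (fact k :: nat))"
    by (simp add: algebra_simps)
  have "2^k * fact k dvd (2*k+1) * (fact (2*k) :: nat)"
    using Suc.IH by (rule dvd_mult)
  then show ?case unfolding e1 e2 by (rule mult_dvd_mono[OF dvd_refl])
qed

lemma fact_half: "2^(m div 2) * fact (m div 2) dvd (fact m :: nat)"
proof -
  have "fact (2 * (m div 2)) dvd (fact m :: nat)" by (rule fact_dvd) simp
  then show ?thesis using fact2[of "m div 2"] dvd_trans by blast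
qed

definition g :: "nat \<Rightarrow> nat" where "g m = m div 2 + m div 4 + m div 8"

lemma fact_g: "2 ^ g m dvd (fact m :: nat)"
proof -
  have d4: "m div 2 div 2 = m div 4" "m div 4 div 2 = m div 8"
    by (simp_all add: div_mult2_eq)
  have a: "2^(m div 4) * fact (m div 4) dvd (fact (m div 2) :: nat)"
    using fact_half[of "m div 2"] d4 by simp
  have b: "2^(m div 8) * fact (m div 8) dvd (fact (m div 4) :: nat)"
    using fact_half[of "m div 4"] d4 by simp
  have "2^(m div 8) dvd (fact (m div 4) :: nat)" using b dvd_mult_left by blast
  then have "2^(m div 4) * 2^(m div 8) dvd (fact (m div 2) :: nat)"
    using a by (meson dvd_trans mult_dvd_mono dvd_refl)
  then have "2^(m div 2) * (2^(m div 4) * 2^(m div 8)) dvd (fact m :: nat)"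
    using fact_half[of m] by (meson dvd_trans mult_dvd_mono dvd_refl)
  then show ?thesis unfolding g_def by (simp add: power_add mult.assoc)
qed

lemma g_le_v: "g m \<le> v (fact m)"
  by (rule multiplicity_geI[of "fact m" 2, OF _ _ fact_g]) auto

lemma step8: "(m'::nat) \<ge> 1 \<Longrightarrow> 8*((m'::nat)+3)*(m'+1)^2 < 2^G \<Longrightarrow> 8*(m'+11)*(m'+9)^2 < (2::nat)^(G + 7)"
proof -
  assume m1: "m' \<ge> 1" and IH: "8*(m'+3)*(m'+1)^2 < 2^G"
  have h1: "m'+11 \<le> 4*(m'+3)" by simp
  have h3: "(m'+9)^2 \<le> 25*(m'+1)^2"
  proof -
    have "(m'+9)^2 \<le> (5*(m'+1))^2" by (rule power_mono) (use m1 in simp_all)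
    also have "\<dots> = 25*(m'+1)^2" by (simp only: power_mult_distrib) simp
    finally show ?thesis .
  qed
  define a where "a = m'+3"
  define B where "B = (m'+1)^2"
  have "8 * (m'+11) * (m'+9)^2 \<le> 8 * (4 * a) * (25 * B)"
    using h1 h3 unfolding a_def B_def by (intro mult_le_mono) auto
  also have "\<dots> \<le> 128 * (8 * a * B)" by simp
  also have "\<dots> < 128 * 2 ^ G" using IH unfolding a_def B_def by linarith
  also have "\<dots> = 2 ^ (G+7)" by (simp add: power_add)
  finally show ?thesis .
qed
lemma big_ineq: "m \<ge> 20 \<Longrightarrow> 8 * (m+3) * (m+1)^2 < (2::nat) ^ g m"
proof (induction m rule: less_induct)
  case (less m)
  show ?case
  proof (cases "m < 28")
    case True
    then have "m = 20 \<or> m = 21 \<or> m = 22 \<or> m = 23 \<or> m = 24 \<or> m = 25 \<or> m = 26 \<or> m = 27"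
      using less.prems by presburger
    then show ?thesis by (elim disjE; simp add: g_def)
  next
    case False
    define m' where "m' = m - 8"
    have mm: "m = m' + 8" "m' \<ge> 20" using False m'_def by auto
    have "m' < m" "20 \<le> m'" using mm by simp_all
    then have IH: "8 * (m'+3) * (m'+1)^2 < (2::nat) ^ g m'" by (rule less.IH)
    have d: "(m'+8) div 2 = m' div 2 + 4" "(m'+8) div 4 = m' div 4 + 2" "(m'+8) div 8 = m' div 8 + 1"
      using div_mult_self1[of 2 m' 4] div_mult_self1[of 4 m' 2] div_mult_self1[of 8 m' 1] by simp_all
    have gg: "g m = g m' + 7" unfolding g_def mm(1) d by simp
    have "1 \<le> m'" using mm by simp
    then have "8*(m'+11)*(m'+9)^2 < (2::nat)^(g m' + 7)" using IH by (rule step8)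
    moreover have "m + 3 = m'+11" "m+1 = m'+9" using mm by simp_all
    ultimately show ?thesis unfolding gg by (simp only:)
  qed
qed

lemma pp_le: "x > 0 \<Longrightarrow> y > 0 \<Longrightarrow> pow2part x \<le> of_nat c * pow2part y \<Longrightarrow> 2 ^ v x \<le> c * 2 ^ v y"
  by (simp add: pp of_nat_eq_enat)

lemma A_Suc: "A (Suc n) = Suc n * A n + 1"
proof -
  have "A (Suc n) = (\<Sum>r\<le>n. fact (Suc n) div fact r) + fact (Suc n) div fact (Suc n)"
    unfolding A_def by simp
  also have "(\<Sum>r\<le>n. fact (Suc n) div fact r) = (\<Sum>r\<le>n. Suc n * (fact n div fact r))"
  proof (rule sum.cong)
    fix r assume "r \<in> {..n}"
    then have "fact r dvd (fact n :: nat)" by (simp add: fact_dvd)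
    then show "fact (Suc n) div fact r = Suc n * (fact n div (fact r :: nat))"
      by (simp add: div_mult_swap)
  qed simp
  also have "\<dots> = Suc n * A n" unfolding A_def by (simp add: sum_distrib_left)
  finally show ?thesis by simp
qed

lemma A_0: "A 0 = 1" by (simp add: A_def)

lemma Qt0: "Q 0 = 0" by simp
lemma Qt1: "Q 1 = 1" by simp
lemma Qt2: "Q 2 = 1" using Q_rec[of 2] Qt1 Qt0 by (simp add: b_def)
lemma Qt3: "Q 3 = 3" using Q_rec[of 3] Qt2 Qt1 by (simp add: b_def)
lemma Qt4: "Q 4 = 4" using Q_rec[of 4] Qt3 Qt2 by (simp add: b_def)
lemma Qt5: "Q 5 = 7" using Q_rec[of 5] Qt4 Qt3 by (simp add: b_def)
lemma Qt6: "Q 6 = 32" using Q_rec[of 6] Qt5 Qt4 by (simp add: b_def)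
lemma Qt7: "Q 7 = 39" using Q_rec[of 7] Qt6 Qt5 by (simp add: b_def)
lemma Qt8: "Q 8 = 71" using Q_rec[of 8] Qt7 Qt6 by (simp add: b_def)
lemma Qt9: "Q 9 = 465" using Q_rec[of 9] Qt8 Qt7 by (simp add: b_def)
lemma Qt10: "Q 10 = 536" using Q_rec[of 10] Qt9 Qt8 by (simp add: b_def)
lemma Qt11: "Q 11 = 1001" using Q_rec[of 11] Qt10 Qt9 by (simp add: b_def)
lemma Qt12: "Q 12 = 8544" using Q_rec[of 12] Qt11 Qt10 by (simp add: b_def)
lemma Qt13: "Q 13 = 9545" using Q_rec[of 13] Qt12 Qt11 by (simp add: b_def)
lemma Qt14: "Q 14 = 18089" using Q_rec[of 14] Qt13 Qt12 by (simp add: b_def)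
lemma Qt15: "Q 15 = 190435" using Q_rec[of 15] Qt14 Qt13 by (simp add: b_def)
lemma Qt16: "Q 16 = 208524" using Q_rec[of 16] Qt15 Qt14 by (simp add: b_def)
lemma Qt17: "Q 17 = 398959" using Q_rec[of 17] Qt16 Qt15 by (simp add: b_def)
lemma Qt18: "Q 18 = 4996032" using Q_rec[of 18] Qt17 Qt16 by (simp add: b_def)
lemma Qt19: "Q 19 = 5394991" using Q_rec[of 19] Qt18 Qt17 by (simp add: b_def)
lemma Qt20: "Q 20 = 10391023" using Q_rec[of 20] Qt19 Qt18 by (simp add: b_def)
lemma Qt21: "Q 21 = 150869313" using Q_rec[of 21] Qt20 Qt19 by (simp add: b_def)
lemma Qt22: "Q 22 = 161260336" using Q_rec[of 22] Qt21 Qt20 by (simp add: b_def)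
lemma Qt23: "Q 23 = 312129649" using Q_rec[of 23] Qt22 Qt21 by (simp add: b_def)
lemma Qt24: "Q 24 = 5155334720" using Q_rec[of 24] Qt23 Qt22 by (simp add: b_def)
lemma Qt25: "Q 25 = 5467464369" using Q_rec[of 25] Qt24 Qt23 by (simp add: b_def)
lemma Qt26: "Q 26 = 10622799089" using Q_rec[of 26] Qt25 Qt24 by (simp add: b_def)
lemma Qt27: "Q 27 = 196677847971" using Q_rec[of 27] Qt26 Qt25 by (simp add: b_def)
lemma Qt28: "Q 28 = 207300647060" using Q_rec[of 28] Qt27 Qt26 by (simp add: b_def)
lemma Qt29: "Q 29 = 403978495031" using Q_rec[of 29] Qt28 Qt27 by (simp add: b_def)
lemma Qt30: "Q 30 = 8286870547680" using Q_rec[of 30] Qt29 Qt28 by (simp add: b_def)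
lemma Qt31: "Q 31 = 8690849042711" using Q_rec[of 31] Qt30 Qt29 by (simp add: b_def)
lemma Qt32: "Q 32 = 16977719590391" using Q_rec[of 32] Qt31 Qt30 by (simp add: b_def)
lemma Qt33: "Q 33 = 382200680031313" using Q_rec[of 33] Qt32 Qt31 by (simp add: b_def)
lemma Qt34: "Q 34 = 399178399621704" using Q_rec[of 34] Qt33 Qt32 by (simp add: b_def)
lemma Qt35: "Q 35 = 781379079653017" using Q_rec[of 35] Qt34 Qt33 by (simp add: b_def)
lemma Qt36: "Q 36 = 19152276311294112" using Q_rec[of 36] Qt35 Qt34 by (simp add: b_def)
lemma Qt37: "Q 37 = 19933655390947129" using Q_rec[of 37] Qt36 Qt35 by (simp add: b_def)
lemma Qt38: "Q 38 = 39085931702241241" using Q_rec[of 38] Qt37 Qt36 by (simp add: b_def)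
lemma Qt39: "Q 39 = 1036167879649219395" using Q_rec[of 39] Qt38 Qt37 by (simp add: b_def)
lemma Qt40: "Q 40 = 1075253811351460636" using Q_rec[of 40] Qt39 Qt38 by (simp add: b_def)
lemma Qt41: "Q 41 = 2111421691000680031" using Q_rec[of 41] Qt40 Qt39 by (simp add: b_def)
lemma Qt42: "Q 42 = 60195061159370501504" using Q_rec[of 42] Qt41 Qt40 by (simp add: b_def)
lemma Qt43: "Q 43 = 62306482850371181535" using Q_rec[of 43] Qt42 Qt41 by (simp add: b_def)
lemma Qt44: "Q 44 = 122501544009741683039" using Q_rec[of 44] Qt43 Qt42 by (simp add: b_def)
lemma Qt45: "Q 45 = 3737352803142621672705" using Q_rec[of 45] Qt44 Qt43 by (simp add: b_def)
lemma Qt46: "Q 46 = 3859854347152363355744" using Q_rec[of 46] Qt45 Qt44 by (simp add: b_def)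
lemma Qt47: "Q 47 = 7597207150294985028449" using Q_rec[of 47] Qt46 Qt45 by (simp add: b_def)
lemma Qt48: "Q 48 = 246970483156591884266112" using Q_rec[of 48] Qt47 Qt46 by (simp add: b_def)
lemma Qt49: "Q 49 = 254567690306886869294561" using Q_rec[of 49] Qt48 Qt47 by (simp add: b_def)
lemma Qt50: "Q 50 = 501538173463478753560673" using Q_rec[of 50] Qt49 Qt48 by (simp add: b_def)
lemma Qt51: "Q 51 = 17306865588065164490357443" using Q_rec[of 51] Qt50 Qt49 by (simp add: b_def)
lemma Qt52: "Q 52 = 17808403761528643243918116" using Q_rec[of 52] Qt51 Qt50 by (simp add: b_def)
lemma Qt53: "Q 53 = 35115269349593807734275559" using Q_rec[of 53] Qt52 Qt51 by (simp add: b_def)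
lemma Qt54: "Q 54 = 1281958100346905721677838240" using Q_rec[of 54] Qt53 Qt52 by (simp add: b_def)
lemma Qt55: "Q 55 = 1317073369696499529412113799" using Q_rec[of 55] Qt54 Qt53 by (simp add: b_def)
lemma Qt56: "Q 56 = 2599031470043405251089952039" using Q_rec[of 56] Qt55 Qt54 by (simp add: b_def)
lemma Qt57: "Q 57 = 100080269231345899070830291281" using Q_rec[of 57] Qt56 Qt55 by (simp add: b_def)
lemma Qt58: "Q 58 = 102679300701389304321920243320" using Q_rec[of 58] Qt57 Qt56 by (simp add: b_def)
lemma Qt59: "Q 59 = 202759569932735203392750534601" using Q_rec[of 59] Qt58 Qt57 by (simp add: b_def)
lemma Qt60: "Q 60 = 8213062098010797440031941627360" using Q_rec[of 60] Qt59 Qt58 by (simp add: b_def)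
lemma Qt61: "Q 61 = 8415821667943532643424692161961" using Q_rec[of 61] Qt60 Qt59 by (simp add: b_def)
lemma Qt62: "Q 62 = 16628883765954330083456633789321" using Q_rec[of 62] Qt61 Qt60 by (simp add: b_def)
lemmas Qtab = Qt0 Qt1 Qt2 Qt3 Qt4 Qt5 Qt6 Qt7 Qt8 Qt9 Qt10 Qt11 Qt12 Qt13 Qt14 Qt15 Qt16 Qt17 Qt18 Qt19 Qt20 Qt21 Qt22 Qt23 Qt24 Qt25 Qt26 Qt27 Qt28 Qt29 Qt30 Qt31 Qt32 Qt33 Qt34 Qt35 Qt36 Qt37 Qt38 Qt39 Qt40 Qt41 Qt42 Qt43 Qt44 Qt45 Qt46 Qt47 Qt48 Qt49 Qt50 Qt51 Qt52 Qt53 Qt54 Qt55 Qt56 Qt57 Qt58 Qt59 Qt60 Qt61 Qt62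
lemma Ft0: "fact 0 = (1::nat)" by simp
lemma Ft1: "fact 1 = (1::nat)" using fact_Suc[where n=0 and 'a=nat] Ft0 by simp
lemma Ft2: "fact 2 = (2::nat)" using fact_Suc[where n=1 and 'a=nat] Ft1 by simp
lemma Ft3: "fact 3 = (6::nat)" using fact_Suc[where n=2 and 'a=nat] Ft2 by simp
lemma Ft4: "fact 4 = (24::nat)" using fact_Suc[where n=3 and 'a=nat] Ft3 by simp
lemma Ft5: "fact 5 = (120::nat)" using fact_Suc[where n=4 and 'a=nat] Ft4 by simp
lemma Ft6: "fact 6 = (720::nat)" using fact_Suc[where n=5 and 'a=nat] Ft5 by simp
lemma Ft7: "fact 7 = (5040::nat)" using fact_Suc[where n=6 and 'a=nat] Ft6 by simp
lemma Ft8: "fact 8 = (40320::nat)" using fact_Suc[where n=7 and 'a=nat] Ft7 by simp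
lemma Ft9: "fact 9 = (362880::nat)" using fact_Suc[where n=8 and 'a=nat] Ft8 by simp
lemma Ft10: "fact 10 = (3628800::nat)" using fact_Suc[where n=9 and 'a=nat] Ft9 by simp
lemma Ft11: "fact 11 = (39916800::nat)" using fact_Suc[where n=10 and 'a=nat] Ft10 by simp
lemma Ft12: "fact 12 = (479001600::nat)" using fact_Suc[where n=11 and 'a=nat] Ft11 by simp
lemma Ft13: "fact 13 = (6227020800::nat)" using fact_Suc[where n=12 and 'a=nat] Ft12 by simp
lemma Ft14: "fact 14 = (87178291200::nat)" using fact_Suc[where n=13 and 'a=nat] Ft13 by simp
lemma Ft15: "fact 15 = (1307674368000::nat)" using fact_Suc[where n=14 and 'a=nat] Ft14 by simp
lemma Ft16: "fact 16 = (20922789888000::nat)" using fact_Suc[where n=15 and 'a=nat] Ft15 by simp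
lemma Ft17: "fact 17 = (355687428096000::nat)" using fact_Suc[where n=16 and 'a=nat] Ft16 by simp
lemma Ft18: "fact 18 = (6402373705728000::nat)" using fact_Suc[where n=17 and 'a=nat] Ft17 by simp
lemma Ft19: "fact 19 = (121645100408832000::nat)" using fact_Suc[where n=18 and 'a=nat] Ft18 by simp
lemmas Ftab = Ft0 Ft1 Ft2 Ft3 Ft4 Ft5 Ft6 Ft7 Ft8 Ft9 Ft10 Ft11 Ft12 Ft13 Ft14 Ft15 Ft16 Ft17 Ft18 Ft19
lemma At0: "A 0 = 1" by (rule A_0)
lemma At1: "A 1 = 2" using A_Suc[of 0] At0 by simp
lemma At2: "A 2 = 5" using A_Suc[of 1] At1 by (simp add: numeral_2_eq_2)
lemma At3: "A 3 = 16" using A_Suc[of 2] At2 by simp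
lemma At4: "A 4 = 65" using A_Suc[of 3] At3 by simp
lemma At5: "A 5 = 326" using A_Suc[of 4] At4 by simp
lemma At6: "A 6 = 1957" using A_Suc[of 5] At5 by simp
lemma At7: "A 7 = 13700" using A_Suc[of 6] At6 by simp
lemma At8: "A 8 = 109601" using A_Suc[of 7] At7 by simp
lemma At9: "A 9 = 986410" using A_Suc[of 8] At8 by simp
lemma At10: "A 10 = 9864101" using A_Suc[of 9] At9 by simp
lemma At11: "A 11 = 108505112" using A_Suc[of 10] At10 by simp
lemma At12: "A 12 = 1302061345" using A_Suc[of 11] At11 by simp
lemma At13: "A 13 = 16926797486" using A_Suc[of 12] At12 by simp
lemma At14: "A 14 = 236975164805" using A_Suc[of 13] At13 by simp
lemma At15: "A 15 = 3554627472076" using A_Suc[of 14] At14 by simp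
lemma At16: "A 16 = 56874039553217" using A_Suc[of 15] At15 by simp
lemma At17: "A 17 = 966858672404690" using A_Suc[of 16] At16 by simp
lemma At18: "A 18 = 17403456103284421" using A_Suc[of 17] At17 by simp
lemma At19: "A 19 = 330665665962404000" using A_Suc[of 18] At18 by simp
lemmas Atab = At0 At1 At2 At3 At4 At5 At6 At7 At8 At9 At10 At11 At12 At13 At14 At15 At16 At17 At18 At19
lemma u63: "[0..<63] = [0,1,2,3,4,5,6,7,8,9,10,11,12,13,14,15,16,17,18,19,20,21,22,23,24,25,26,27,28,29,30,31,32,33,34,35,36,37,38,39,40,41,42,43,44,45,46,47,48,49,50,51,52,53,54,55,56,57,58,59,60,61,62::nat]" by (simp add: upt_rec)
lemma u20: "[0..<20] = [0,1,2,3,4,5,6,7,8,9,10,11,12,13,14,15,16,17,18,19::nat]" by (simp add: upt_rec)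
lemma chk1: "list_all (\<lambda>K. Q K dvd fact 19 \<longrightarrow> K \<in> {1,2,3,4,5,6,7,11}) [0..<63]"
  unfolding u63 by (simp del: Q.simps add: Qtab Q.simps(1,2) Ft19)
lemma chk2: "list_all (\<lambda>m. list_all (\<lambda>K. Q K dvd fact m \<longrightarrow> (fact m div Q K) dvd A m \<longrightarrow> m \<in> {0,1,3}) [1,2,3,4,5,6,7,11]) [0..<20]"
  unfolding u20 by (simp del: Q.simps add: Qtab Q.simps(1,2) Ftab Atab)

lemma small_m: "m \<le> 19 \<Longrightarrow> K \<le> 3*m+5 \<Longrightarrow> Q K dvd fact m \<Longrightarrow> (fact m div Q K) dvd A m \<Longrightarrow> m \<in> {0,1,3}"
proof -
  assume m: "m \<le> 19" and K: "K \<le> 3*m+5" and d1: "Q K dvd fact m" and d2: "(fact m div Q K) dvd A m"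
  have "fact m dvd (fact 19 :: nat)" using m by (rule fact_dvd)
  then have "Q K dvd fact 19" using d1 dvd_trans by blast
  moreover have "K \<in> set [0..<63]" using m K by simp
  ultimately have Kin: "K \<in> set [1,2,3,4,5,6,7,11]" using chk1 by (auto simp: list_all_iff)
  have "m \<in> set [0..<20]" using m by simp
  then show ?thesis using chk2 Kin d1 d2 unfolding list_all_iff by blast
qed

theorem theoremA4:
  assumes i: "\<forall>n. pow2part (Q (3*n)) \<le> 4 * pow2part (n * (n + 2))"
    and ii: "\<forall>n. pow2part (Q (3*n+1)) \<le> 2 * pow2part (n + 1)"
    and iii: "\<forall>n. pow2part (Q (3*n+2)) = 1"
    and iv: "\<forall>n. pow2part (A n) \<le> of_nat ((n + 1)^2)"
  shows "card {m. \<exists>k. of_nat (A m) / fact m = e_convergent k} = 2"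
proof -
  have sub: "m \<in> {1,3}" if h: "of_nat (A m) / fact m = e_convergent k" for m k
  proof -
    define p where "p = fst (W k)"
    define q where "q = snd (W k)"
    have qQ: "q = Q (Suc k)" using W_Q q_def by simp
    have qpos: "q > 0" using qQ Q_pos by simp
    have cop: "coprime p q" using W_coprime p_def q_def by simp
    have "(of_nat (A m) :: rat) / of_nat (fact m) = of_nat p / of_nat q"
      using h conv_W[of k] p_def q_def by simp
    then have "(of_nat (A m * q) :: rat) = of_nat (p * fact m)"
      using qpos by (simp add: frac_eq_eq)
    then have eq: "A m * q = p * fact m" by (simp only: of_nat_eq_iff)
    have "q dvd p * fact m" using eq by (metis dvd_triv_right)
    then have qd: "q dvd fact m" using cop coprime_dvd_mult_right_iff coprime_commute by blast
    then obtain r where r: "fact m = q * r" by blast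
    have "A m * q = (p * r) * q" using eq r by (simp only: ac_simps)
    then have Apr: "A m = p * r" using qpos mult_right_cancel[of q "A m" "p * r"] by linarith
    have rd: "r dvd A m" using Apr by simp
    have rpos: "r > 0" using r by (cases r) auto
    have qle: "q \<le> fact m" using qd by (simp add: dvd_imp_le)
    have m0: "m \<noteq> 0"
    proof
      assume "m = 0"
      then have "q * r = 1" using r by simp
      then have "q = 1" "r = 1" by simp_all
      then have "p = 1" using Apr \<open>m = 0\<close> by (simp add: A_def)
      moreover have "p \<ge> 2 * q" using W_ge2 p_def q_def by simp
      ultimately show False using \<open>q = 1\<close> by simp
    qed
    define K where "K = Suc k"
    have Kb: "K \<le> 3*m+5"
    proof (rule ccontr)
      assume "\<not> K \<le> 3*m+5"
      then have "Q (3*(m+1)+2) \<le> Q K" by (intro Q_mono) simp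
      moreover have "2^(m+1) * fact (m+1) \<le> Q (3*(m+1)+2)" by (rule Q_grow)
      moreover have "(fact m :: nat) < 2^(m+1) * fact (m+1)"
      proof -
        have "(fact m :: nat) < fact (m+1)" by (rule fact_less_mono) (use m0 in auto)
        also have "\<dots> \<le> 2^(m+1) * fact (m+1)" by simp
        finally show ?thesis .
      qed
      ultimately show False using qle qQ K_def by simp
    qed
    show ?thesis
    proof (cases "m \<le> 19")
      case True
      have "fact m div Q K = r" using r qpos qQ K_def by simp
      then have "m \<in> {0,1,3}" using small_m[OF True Kb] qd rd qQ K_def by simp
      then show ?thesis using m0 by simp
    next
      case False
      have vf: "v (fact m) = v q + v r" using r qpos rpos by (simp add: v_mult)
      have vr: "v r \<le> v (A m)" using rd A_pos by (intro dvd_imp_multiplicity_le) auto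
      have vA: "(2::nat) ^ v (A m) \<le> (m+1)^2"
        using iv[rule_format, of m] A_pos[of m] by (simp add: pp of_nat_eq_enat)
      have vq: "(2::nat) ^ v q \<le> 8 * (m+3)"
      proof -
        define n where "n = K div 3"
        have Kn: "K = 3 * n + K mod 3" unfolding n_def by simp
        have nm: "n \<le> m+1" using Kb unfolding n_def by simp
        consider "K mod 3 = 0" | "K mod 3 = 1" | "K mod 3 = 2" by linarith
        then show ?thesis
        proof cases
          case 1
          then have KK: "K = 3*n" using Kn by simp
          then have n1: "n \<ge> 1" using K_def by (cases n) auto
          have "pow2part (Q (3*n)) \<le> of_nat 4 * pow2part (n * (n + 2))" using i by simp
          then have "(2::nat) ^ v (Q (3*n)) \<le> 4 * 2 ^ v (n * (n+2))"
            using n1 by (intro pp_le) (auto intro: Q_pos)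
          also have "\<dots> \<le> 4 * (2 * (n+2))" using nn2_bound[OF n1] by simp
          also have "\<dots> \<le> 8 * (m+3)" using nm by simp
          finally show ?thesis using KK qQ K_def by simp
        next
          case 2
          then have KK: "K = 3*n+1" using Kn by simp
          have "pow2part (Q (3*n+1)) \<le> of_nat 2 * pow2part (n + 1)" using ii by simp
          then have "(2::nat) ^ v (Q (3*n+1)) \<le> 2 * 2 ^ v (n+1)"
            by (intro pp_le) (auto intro: Q_pos)
          also have "\<dots> \<le> 2 * (n+1)" using pow2_le[of "n+1"] by simp
          also have "\<dots> \<le> 8 * (m+3)" using nm by simp
          finally show ?thesis using KK qQ K_def by simp
        next
          case 3
          then have KK: "K = 3*n+2" using Kn by simp
          have "pow2part (Q (3*n+2)) = 1" using iii by simp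
          then have "(2::nat) ^ v (Q (3*n+2)) = 1" using Q_pos[of "3*n+2"]
            by (simp add: pp one_enat_def)
          then show ?thesis using KK qQ K_def by simp
        qed
      qed
      have "(2::nat) ^ g m \<le> 2 ^ v (fact m)" using g_le_v[of m] by (simp add: power_increasing)
      also have "\<dots> = 2 ^ v q * 2 ^ v r" using vf by (simp add: power_add)
      also have "\<dots> \<le> 2 ^ v q * 2 ^ v (A m)" using vr by (simp add: power_increasing)
      also have "\<dots> \<le> 8 * (m+3) * (m+1)^2" using vq vA by (intro mult_le_mono) auto
      finally have "(2::nat) ^ g m \<le> 8 * (m+3) * (m+1)^2" .
      moreover have "8 * (m+3) * (m+1)^2 < (2::nat) ^ g m" using False by (intro big_ineq) simp
      ultimately show ?thesis by simp
    qed
  qed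
  have s1: "of_nat (A 1) / fact 1 = e_convergent 0"
    by (simp add: A_Suc[of 0, simplified] A_0 e_convergent_def e_cf_def)
  have s3: "of_nat (A 3) / fact 3 = e_convergent 2"
  proof -
    have a3: "A 3 = 16" using A_Suc[of 0] A_Suc[of 1] A_Suc[of 2] A_0 by (simp add: numeral_eq_Suc)
    have u: "[0..<Suc 2] = [0,1,2::nat]" by (simp add: upt_rec)
    have "e_convergent 2 = cf_eval [2,1,2]" unfolding e_convergent_def u by (simp add: e_cf_def)
    also have "\<dots> = 8/3" by simp
    finally show ?thesis using a3 by (simp add: fact_numeral)
  qed
  have "{m. \<exists>k. of_nat (A m) / fact m = e_convergent k} = {1,3}"
    using sub s1 s3 by blast
  then show ?thesis by simp
qed

end
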